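(* Let $d=p$ be any prime with $p\equiv 3\pmod 4$, let $x_0=-2-\sqrt{d+1}$ (with $\sqrt{d+1}>0$), and let $\sqrt{x_0}$ be a purely imaginary square root of $x_0$. Then there exists $x_1\in\mathbb{C}$ with $|x_1|=1$ such that the vector $|\mathbf v\rangle\in\mathbb{C}^d$ with components $v_0=\sqrt{x_0}$, $v_j=x_1$ for $j$ a nonzero quadratic residue mod $d$, and $v_j=-1/x_1$ for $j$ a quadratic nonresidue mod $d$, satisfies $$\langle\mathbf v|X^{-2j}|\mathbf v\rangle=(\sqrt{d+1}+1)\,v_j^2\qquad\text{for all } j\not\equiv 0\pmod d,$$ where $X$ is the cyclic shift $X|r\rangle=|r+1\rangle$, so that $\langle\mathbf v|X^{-2j}|\mathbf v\rangle=\sum_{k=0}^{d-1}v_k^*v_{k+2j}$.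
   Context: Indices are taken modulo $d$ and $^*$ denotes complex conjugation. Such a vector is called a Legendre vector; the displayed identity is called the $X$-overlap equation. *)

theory Defs
  imports "HOL-Analysis.Analysis" "HOL-Number_Theory.Number_Theory"
begin

definition legendre_vec :: "int \<Rightarrow> complex \<Rightarrow> complex \<Rightarrow> int \<Rightarrow> complex" where
  "legendre_vec d s x1 k =
     (if d dvd k then s else if QuadRes d k then x1 else - 1 / x1)"

definition overlap :: "int \<Rightarrow> (int \<Rightarrow> complex) \<Rightarrow> int \<Rightarrow> complex" where
  "overlap d v m = (\<Sum>k=0..<d. cnj (v k) * v (k + m))"

end

theory Submission
  imports Defs
begin


lemma Leg_cong:
  assumes "[a = b] (mod P)"
  shows "Legendre a P = Legendre b P"
proof -
  have "[a = 0] (mod P) \<longleftrightarrow> [b = 0] (mod P)"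
    using assms cong_sym cong_trans by blast
  moreover have "QuadRes P a \<longleftrightarrow> QuadRes P b"
    unfolding QuadRes_def using assms cong_sym cong_trans by blast
  ultimately show ?thesis unfolding Legendre_def by simp
qed

lemma Leg_mod: "Legendre (a mod P) P = Legendre a P"
  by (rule Leg_cong) (simp add: cong_def)

lemma Leg_vals: "Legendre a P \<in> {-1,0,1}"
  unfolding Legendre_def by auto

lemma Leg_zero_iff: "Legendre a P = 0 \<longleftrightarrow> P dvd a"
  unfolding Legendre_def by (auto simp: cong_0_iff)

lemma Leg_sq_nz: "\<not> P dvd a \<Longrightarrow> Legendre a P * Legendre a P = 1"
  using Leg_vals[of a P] Leg_zero_iff[of a P] by auto

lemma cong_small_eq:
  fixes u w :: int
  assumes "[u = w] (mod P)" "P > 2" "u \<in> {-1,0,1}" "w \<in> {-1,0,1}"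
  shows "u = w"
proof -
  have "P dvd u - w" using assms(1) cong_iff_dvd_diff by blast
  then obtain q where q: "u - w = P * q" by (auto simp: dvd_def)
  have "\<bar>u - w\<bar> \<le> 2" using assms(3,4) by auto
  hence "\<bar>P * q\<bar> \<le> 2" using q by simp
  hence "P * \<bar>q\<bar> \<le> 2" using assms(2) by (simp add: abs_mult)
  hence "q = 0" using assms(2)
    by (cases "q = 0") (auto, smt (verit) mult_le_cancel_left1 zero_less_abs_iff)
  thus ?thesis using q by simp
qed

lemma Leg_mult:
  assumes "prime p" "p > 2"
  shows "Legendre (a * b) (int p) = Legendre a (int p) * Legendre b (int p)"
proof -
  have P2: "int p > 2" using assms by simp
  have "[Legendre (a*b) (int p) = (a*b) ^ ((p - 1) div 2)] (mod int p)"
    using euler_criterion[OF assms] by simp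
  moreover have "[Legendre a (int p) * Legendre b (int p) = a ^ ((p - 1) div 2) * b ^ ((p - 1) div 2)] (mod int p)"
    using euler_criterion[OF assms] cong_mult by blast
  ultimately have "[Legendre (a*b) (int p) = Legendre a (int p) * Legendre b (int p)] (mod int p)"
    by (metis cong_sym cong_trans power_mult_distrib)
  moreover have "Legendre a (int p) * Legendre b (int p) \<in> {-1,0,1}"
    using Leg_vals[of a "int p"] Leg_vals[of b "int p"] by auto
  ultimately show ?thesis using cong_small_eq[OF _ P2 Leg_vals] by blast
qed

lemma Leg_minus1:
  assumes "prime p" "p mod 4 = 3"
  shows "Legendre (-1) (int p) = -1"
proof -
  have P2: "p > 2" using assms prime_gt_1_nat[of p] by presburger
  have "odd ((p - 1) div 2)" using assms P2 by presburger
  hence "[Legendre (-1) (int p) = -1] (mod int p)"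
    using euler_criterion[OF assms(1) P2, of "-1"] by simp
  thus ?thesis using cong_small_eq[OF _ _ Leg_vals] P2 by auto
qed


lemma reindex_endo:
  assumes "finite A" "g ` A \<subseteq> A" "inj_on g A"
  shows "sum f A = sum (\<lambda>k. f (g k)) A"
proof -
  have "g ` A = A" using endo_inj_surj[OF assms] .
  hence "sum f A = sum f (g ` A)" by simp
  also have "\<dots> = sum (\<lambda>k. f (g k)) A" using sum.reindex[OF assms(3)] by (simp add: comp_def)
  finally show ?thesis .
qed

lemma mod_range_eq:
  fixes P k1 k2 :: int
  assumes "k1 \<in> {0..<P}" "k2 \<in> {0..<P}" "P dvd k1 - k2"
  shows "k1 = k2"
proof -
  have "k1 mod P = k2 mod P" using assms(3) mod_eq_dvd_iff by blast
  thus ?thesis using assms(1,2) by simp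
qed

lemma mult_inj:
  assumes "prime p" "\<not> int p dvd c"
  shows "inj_on (\<lambda>k. (c*k) mod int p) {0..<int p}"
proof (rule inj_onI)
  fix k1 k2 assume k: "k1 \<in> {0..<int p}" "k2 \<in> {0..<int p}" "(c*k1) mod int p = (c*k2) mod int p"
  have "int p dvd c*k1 - c*k2" using k(3) mod_eq_dvd_iff by blast
  hence "int p dvd c*(k1 - k2)" by (simp add: right_diff_distrib)
  hence "int p dvd k1 - k2" using assms prime_dvd_mult_iff[of "int p"] by auto
  thus "k1 = k2" using mod_range_eq k by blast
qed

lemma shift_inj:
  shows "inj_on (\<lambda>k. (k + m) mod int p) {0..<int p}"
proof (rule inj_onI)
  fix k1 k2 assume k: "k1 \<in> {0..<int p}" "k2 \<in> {0..<int p}" "(k1 + m) mod int p = (k2 + m) mod int p"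
  have "int p dvd (k1 + m) - (k2 + m)" using k(3) mod_eq_dvd_iff by blast
  hence "int p dvd k1 - k2" by simp
  thus "k1 = k2" using mod_range_eq k by blast
qed

lemma mod_into: "p > 0 \<Longrightarrow> (\<lambda>k. x k mod int p) ` A \<subseteq> {0..<int p}"
  by auto

lemma sum_shift:
  assumes "p > 0" "\<And>x. f (x mod int p) = f x"
  shows "(\<Sum>k\<in>{0..<int p}. f (k + m)) = (\<Sum>k\<in>{0..<int p}. f k)"
proof -
  have "(\<Sum>k\<in>{0..<int p}. f k) = (\<Sum>k\<in>{0..<int p}. f ((k + m) mod int p))"
    by (rule reindex_endo[OF _ mod_into[OF assms(1)] shift_inj]) simp
  thus ?thesis using assms(2) by simp
qed

lemma sum_mult:
  assumes "prime p" "\<not> int p dvd c" "\<And>x. f (x mod int p) = f x"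
  shows "(\<Sum>k\<in>{0..<int p}. f (c * k)) = (\<Sum>k\<in>{0..<int p}. f k)"
proof -
  have "p > 0" using assms(1) prime_gt_0_nat by blast
  have "(\<Sum>k\<in>{0..<int p}. f k) = (\<Sum>k\<in>{0..<int p}. f ((c * k) mod int p))"
    by (rule reindex_endo[OF _ mod_into[OF \<open>p > 0\<close>] mult_inj[OF assms(1,2)]]) simp
  thus ?thesis using assms(3) by simp
qed

lemma sum_Leg:
  assumes "prime p" "p mod 4 = 3"
  shows "(\<Sum>k\<in>{0..<int p}. Legendre k (int p)) = 0"
proof -
  have p2: "p > 2" using assms prime_gt_1_nat[of p] by presburger
  have nd: "\<not> int p dvd -1" using p2 by simp
  have "(\<Sum>k\<in>{0..<int p}. Legendre k (int p)) = (\<Sum>k\<in>{0..<int p}. Legendre (-1 * k) (int p))"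
    using sum_mult[OF assms(1) nd, of "\<lambda>k. Legendre k (int p)"] Leg_mod by simp
  also have "\<dots> = - (\<Sum>k\<in>{0..<int p}. Legendre k (int p))"
  proof -
    have "\<And>k. Legendre (-1 * k) (int p) = - Legendre k (int p)"
      using Leg_mult[OF assms(1) p2, of "-1"] Leg_minus1[OF assms] by presburger
    thus ?thesis by (simp add: sum_negf)
  qed
  finally show ?thesis by simp
qed


definition Scorr :: "nat \<Rightarrow> int \<Rightarrow> int" where
  "Scorr p a = (\<Sum>k\<in>{0..<int p}. Legendre k (int p) * Legendre (k + a) (int p))"

lemma Scorr_mod: "Scorr p (a mod int p) = Scorr p a"
proof -
  have "\<And>k. Legendre (k + a mod int p) (int p) = Legendre (k + a) (int p)"
    by (rule Leg_cong) (simp add: cong_def mod_add_right_eq)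
  thus ?thesis unfolding Scorr_def by simp
qed

lemma Scorr_mult:
  assumes "prime p" "p > 2" "\<not> int p dvd c"
  shows "Scorr p (c * a) = Scorr p a"
proof -
  let ?f = "\<lambda>k. Legendre k (int p) * Legendre (k + c * a) (int p)"
  have per: "\<And>x. ?f (x mod int p) = ?f x"
  proof -
    fix x
    have "Legendre (x mod int p + c * a) (int p) = Legendre (x + c * a) (int p)"
      by (rule Leg_cong) (simp add: cong_def mod_add_left_eq)
    thus "?f (x mod int p) = ?f x" by (simp add: Leg_mod)
  qed
  have "Scorr p (c * a) = (\<Sum>k\<in>{0..<int p}. ?f (c * k))"
    unfolding Scorr_def using sum_mult[OF assms(1,3), of ?f, OF per] by simp
  also have "\<dots> = Scorr p a"
    unfolding Scorr_def
  proof (rule sum.cong[OF refl])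
    fix k
    have cc: "Legendre c (int p) * Legendre c (int p) = 1" using Leg_sq_nz assms(3) by blast
    have "?f (c * k) = Legendre c (int p) * Legendre k (int p) * (Legendre c (int p) * Legendre (k + a) (int p))"
      using Leg_mult[OF assms(1,2)] by (metis distrib_left)
    also have "\<dots> = (Legendre c (int p) * Legendre c (int p)) * (Legendre k (int p) * Legendre (k + a) (int p))"
      by (simp add: algebra_simps)
    finally show "?f (c * k) = Legendre k (int p) * Legendre (k + a) (int p)" using cc by simp
  qed
  finally show ?thesis .
qed

lemma Scorr_sum:
  assumes "prime p" "p mod 4 = 3"
  shows "(\<Sum>a\<in>{0..<int p}. Scorr p a) = 0"
proof -
  have p0: "p > 0" using assms(1) prime_gt_0_nat by blast
  have "(\<Sum>a\<in>{0..<int p}. Scorr p a) = (\<Sum>k\<in>{0..<int p}. Legendre k (int p) * (\<Sum>a\<in>{0..<int p}. Legendre (a + k) (int p)))"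
    unfolding Scorr_def by (subst sum.swap) (simp add: sum_distrib_left add.commute)
  also have "\<dots> = 0"
    using sum_shift[OF p0, of "\<lambda>a. Legendre a (int p)"] Leg_mod sum_Leg[OF assms] by simp
  finally show ?thesis .
qed

lemma Scorr_0:
  assumes "prime p"
  shows "Scorr p 0 = int p - 1"
proof -
  have p0: "p > 0" using assms(1) prime_gt_0_nat by blast
  have "Scorr p 0 = (\<Sum>k\<in>{0..<int p}. 1 - (if k = 0 then 1 else 0))"
    unfolding Scorr_def
  proof (rule sum.cong[OF refl])
    fix k assume k: "k \<in> {0..<int p}"
    show "Legendre k (int p) * Legendre (k + 0) (int p) = 1 - (if k = 0 then 1 else 0)"
    proof (cases "k = 0")
      case True thus ?thesis by (simp add: Legendre_def)
    next
      case False
      hence "\<not> int p dvd k" using k zdvd_not_zless by fastforce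
      thus ?thesis using Leg_sq_nz False by simp
    qed
  qed
  also have "\<dots> = int p - 1" using p0 by (simp add: sum_subtractf)
  finally show ?thesis .
qed

lemma Scorr_m:
  assumes "prime p" "p mod 4 = 3" "\<not> int p dvd m"
  shows "Scorr p m = -1"
proof -
  have p2: "p > 2" using assms(2) prime_gt_1_nat[OF assms(1)] by presburger
  have p0: "p > 0" using p2 by simp
  have eq: "Scorr p a = Scorr p m" if a: "a \<in> {0..<int p} - {0}" for a
  proof -
    have img: "(\<lambda>c. (m * c) mod int p) ` {0..<int p} = {0..<int p}"
      by (rule endo_inj_surj[OF _ mod_into[OF p0] mult_inj[OF assms(1,3)]]) simp
    then obtain c where c: "c \<in> {0..<int p}" "a = (m * c) mod int p" using a by blast
    have "c \<noteq> 0" using c a by auto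
    hence nd: "\<not> int p dvd c" using c zdvd_not_zless by fastforce
    have "Scorr p a = Scorr p (c * m)" using c(2) Scorr_mod by (simp add: mult.commute)
    also have "\<dots> = Scorr p m" by (rule Scorr_mult[OF assms(1) p2 nd])
    finally show ?thesis .
  qed
  have "0 = (\<Sum>a\<in>{0..<int p}. Scorr p a)" using Scorr_sum[OF assms(1,2)] by simp
  also have "\<dots> = Scorr p 0 + (\<Sum>a\<in>{0..<int p} - {0}. Scorr p a)"
    by (rule sum.remove) (use p0 in auto)
  also have "(\<Sum>a\<in>{0..<int p} - {0}. Scorr p a) = (\<Sum>a\<in>{0..<int p} - {0}. Scorr p m)"
    using eq by (rule sum.cong[OF refl])
  also have "\<dots> = (int p - 1) * Scorr p m" using p0 by simp
  finally have h: "0 = Scorr p 0 + (int p - 1) * Scorr p m" .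
  have "(int p - 1) * (1 + Scorr p m) = Scorr p 0 + (int p - 1) * Scorr p m"
    unfolding Scorr_0[OF assms(1)] by (simp add: distrib_left)
  hence "(int p - 1) * (1 + Scorr p m) = 0" using h[symmetric] by simp
  moreover have "int p - 1 \<noteq> 0" using p2 by simp
  ultimately show ?thesis by simp
qed


lemma sum_delta_dvd:
  assumes "p > 0"
  shows "(\<Sum>k\<in>{0..<int p}. (if int p dvd (k + m) then 1 else 0) * (G k :: complex)) = G ((- m) mod int p)"
proof -
  have "(\<Sum>k\<in>{0..<int p}. (if int p dvd (k + m) then 1 else 0) * G k)
      = (\<Sum>k\<in>{0..<int p}. if k = (- m) mod int p then G k else 0)"
  proof (rule sum.cong[OF refl])
    fix k assume k: "k \<in> {0..<int p}"
    have "int p dvd (k + m) \<longleftrightarrow> k mod int p = (- m) mod int p"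
      using mod_eq_dvd_iff[of k "int p" "- m"] by simp
    also have "\<dots> \<longleftrightarrow> k = (- m) mod int p" using k by simp
    finally show "(if int p dvd (k + m) then 1 else 0) * G k = (if k = (- m) mod int p then G k else 0)"
      by simp
  qed
  also have "\<dots> = G ((- m) mod int p)" using assms by (simp add: sum.delta')
  finally show ?thesis .
qed

lemma overlap_formula:
  fixes p :: nat and \<alpha> d :: complex and a :: real
  assumes pr: "prime p" and p4: "p mod 4 = 3" and nd: "\<not> int p dvd m"
    and v: "\<And>k. v k = \<alpha> + of_real a * of_int (Legendre k (int p)) + (if int p dvd k then d else 0)"
  shows "overlap (int p) v m = of_nat p * (cnj \<alpha> * \<alpha>) - of_real (a^2)
     + (cnj \<alpha> - of_real a * of_int (Legendre m (int p))) * d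
     + cnj d * (\<alpha> + of_real a * of_int (Legendre m (int p)))"
proof -
  have p2: "p > 2" using p4 prime_gt_1_nat[OF pr] by presburger
  have p0: "p > 0" using p2 by simp
  define L where "L k = (of_int (Legendre k (int p)) :: complex)" for k
  define E where "E k = (if int p dvd k then 1 else 0 :: complex)" for k
  define A where "A = {0..<int p}"
  define F1 where "F1 k = (cnj \<alpha> + of_real a * L k) * (\<alpha> + of_real a * L (k + m))" for k
  define G where "G k = (cnj \<alpha> + of_real a * L k) * d" for k
  define H where "H k = cnj d * (\<alpha> + of_real a * L (k + m) + d * E (k + m))" for k
  have vE: "v k = \<alpha> + of_real a * L k + d * E k" for k unfolding v L_def E_def by simp
  have cL: "cnj (L k) = L k" for k unfolding L_def by simp
  have cE: "cnj (E k) = E k" for k unfolding E_def by simp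
  have prod: "cnj (v k) * v (k + m) = F1 k + E (k + m) * G k + E k * H k" for k
    unfolding vE F1_def G_def H_def by (simp add: cL cE algebra_simps)
  have s1: "(\<Sum>k\<in>A. L k) = 0"
    unfolding L_def A_def using sum_Leg[OF pr p4] by (metis of_int_0 of_int_sum)
  have s2: "(\<Sum>k\<in>A. L (k + m)) = 0"
  proof -
    have "(\<Sum>k\<in>A. Legendre (k + m) (int p)) = 0"
      unfolding A_def using sum_shift[OF p0, of "\<lambda>k. Legendre k (int p)"] Leg_mod sum_Leg[OF pr p4] by simp
    thus ?thesis unfolding L_def by (metis of_int_0 of_int_sum)
  qed
  have s3: "(\<Sum>k\<in>A. L k * L (k + m)) = -1"
  proof -
    have "(\<Sum>k\<in>A. Legendre k (int p) * Legendre (k + m) (int p)) = -1"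
      using Scorr_m[OF pr p4 nd] unfolding Scorr_def A_def .
    hence "of_int (\<Sum>k\<in>A. Legendre k (int p) * Legendre (k + m) (int p)) = (-1 :: complex)" by simp
    thus ?thesis unfolding L_def of_int_sum of_int_mult .
  qed
  have sF: "(\<Sum>k\<in>A. F1 k) = of_nat p * (cnj \<alpha> * \<alpha>) - of_real (a^2)"
  proof -
    have "(\<Sum>k\<in>A. F1 k) = (\<Sum>k\<in>A. cnj \<alpha> * \<alpha> + (cnj \<alpha> * of_real a) * L (k + m)
            + (of_real a * \<alpha>) * L k + of_real (a^2) * (L k * L (k + m)))"
      unfolding F1_def by (rule sum.cong[OF refl]) (simp add: algebra_simps power2_eq_square)
    also have "\<dots> = of_nat p * (cnj \<alpha> * \<alpha>) + (cnj \<alpha> * of_real a) * (\<Sum>k\<in>A. L (k + m))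
            + (of_real a * \<alpha>) * (\<Sum>k\<in>A. L k) + of_real (a^2) * (\<Sum>k\<in>A. L k * L (k + m))"
      unfolding sum.distrib sum_distrib_left[symmetric] A_def by simp
    also have "\<dots> = of_nat p * (cnj \<alpha> * \<alpha>) - of_real (a^2)" using s1 s2 s3 by simp
    finally show ?thesis .
  qed
  have sG: "(\<Sum>k\<in>A. E (k + m) * G k) = (cnj \<alpha> - of_real a * L m) * d"
  proof -
    have "(\<Sum>k\<in>A. E (k + m) * G k) = G ((- m) mod int p)"
      unfolding A_def E_def by (rule sum_delta_dvd[OF p0])
    also have "L ((- m) mod int p) = - L m"
    proof -
      have "Legendre ((- m) mod int p) (int p) = Legendre (-1 * m) (int p)" using Leg_mod by simp
      also have "\<dots> = - Legendre m (int p)" using Leg_mult[OF pr p2, of "-1" m] Leg_minus1[OF pr p4] by presburger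
      finally show ?thesis unfolding L_def by simp
    qed
    ultimately show ?thesis unfolding G_def by simp
  qed
  have sH: "(\<Sum>k\<in>A. E k * H k) = cnj d * (\<alpha> + of_real a * L m)"
  proof -
    have "(\<Sum>k\<in>A. E (k + 0) * H k) = H ((- 0) mod int p)"
      unfolding A_def E_def by (rule sum_delta_dvd[OF p0])
    moreover have "E m = 0" unfolding E_def using nd by simp
    ultimately show ?thesis unfolding H_def by simp
  qed
  have "overlap (int p) v m = (\<Sum>k\<in>A. F1 k + E (k + m) * G k + E k * H k)"
    unfolding overlap_def A_def using prod by simp
  also have "\<dots> = (\<Sum>k\<in>A. F1 k) + (\<Sum>k\<in>A. E (k + m) * G k) + (\<Sum>k\<in>A. E k * H k)"
    by (simp add: sum.distrib)
  finally show ?thesis using sF sG sH unfolding L_def by simp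
qed



lemma final_alg:
  fixes a b \<sigma> t :: real and \<eta> \<epsilon> :: int and p :: nat
  assumes e: "\<eta> = 1 \<or> \<eta> = -1" "\<epsilon> = 1 \<or> \<epsilon> = -1"
    and R: "real p * b^2 - a^2 + 2*b*\<sigma> - 2*b^2 = (t+1)*(a^2 - b^2)"
    and I: "- \<eta> * (\<sigma> - b) = (t+1)*b"
  shows "of_nat p * (cnj (Complex 0 b) * Complex 0 b) - of_real (a^2)
     + (cnj (Complex 0 b) - of_real a * of_int (\<eta> * \<epsilon>)) * (Complex 0 \<sigma> - Complex 0 b)
     + cnj (Complex 0 \<sigma> - Complex 0 b) * (Complex 0 b + of_real a * of_int (\<eta> * \<epsilon>))
     = complex_of_real (t+1) * (Complex 0 b + of_real a * of_int \<epsilon>)^2"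
  using e R I
  by (auto simp: complex_eq_iff power2_eq_square algebra_simps)



theorem proposition2:
  fixes p :: nat and s :: complex
  assumes "prime p" and "p mod 4 = 3"
    and "s\<^sup>2 = complex_of_real (- 2 - sqrt (real p + 1))"
    and "Re s = 0"
  shows "\<exists>x1::complex. cmod x1 = 1 \<and>
           (\<forall>j::int. \<not> int p dvd j \<longrightarrow>
              overlap (int p) (legendre_vec (int p) s x1) (2 * j)
                = complex_of_real (sqrt (real p + 1) + 1) * (legendre_vec (int p) s x1 j)\<^sup>2)"
proof -
  note pr = assms(1) and p4 = assms(2)
  have p2: "p > 2" using p4 prime_gt_1_nat[OF pr] by presburger
  define t where "t = sqrt (real p + 1)"
  have t2: "t^2 = real p + 1" unfolding t_def by simp
  have tge: "t \<ge> 2" unfolding t_def using p2 real_le_rsqrt[of 2 "real p + 1"] by simp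
  define \<sigma> where "\<sigma> = Im s"
  have sC: "s = Complex 0 \<sigma>" unfolding \<sigma>_def using assms(4) complex_eq_iff by auto
  have "Re (s^2) = - 2 - t" using assms(3) unfolding t_def by simp
  hence sig2: "\<sigma>^2 = t + 2" unfolding sC by (simp add: power2_eq_square)
  have sig0: "\<sigma> \<noteq> 0" using sig2 tge by auto
  define \<eta> where "\<eta> = Legendre 2 (int p)"
  have eta: "\<eta> = 1 \<or> \<eta> = -1"
  proof -
    have "\<not> int p dvd 2" using p2 zdvd_imp_le[of "int p" 2] by auto
    thus ?thesis using Leg_vals[of 2 "int p"] Leg_zero_iff[of 2 "int p"] unfolding \<eta>_def by auto
  qed
  define b where "b = (if \<eta> = 1 then - \<sigma> / t else 1 / \<sigma>)"
  define a where "a = sqrt (1 - b^2)"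
  have b2le: "b^2 \<le> 1"
  proof (cases "\<eta> = 1")
    case True
    hence "b^2 = \<sigma>^2 / t^2" unfolding b_def by (simp add: power_divide)
    also have "\<dots> = (t + 2) / t^2" using sig2 by simp
    also have "\<dots> \<le> 1"
    proof -
      have "0 \<le> (t - 2) * (t + 1)" using tge by simp
      hence "t + 2 \<le> t^2" by (simp add: power2_eq_square algebra_simps)
      moreover have "t^2 > 0" using tge by simp
      ultimately show ?thesis by (simp add: pos_divide_le_eq)
    qed
    finally show ?thesis .
  next
    case False
    hence "b^2 = 1 / \<sigma>^2" unfolding b_def by (simp add: power_divide)
    also have "\<dots> = 1 / (t + 2)" using sig2 by simp
    also have "\<dots> \<le> 1" using tge by simp
    finally show ?thesis .
  qed
  have a2: "a^2 = 1 - b^2" unfolding a_def using b2le by simp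
  define x where "x = Complex a b"
  have cm: "cmod x = 1" unfolding x_def cmod_def using a2 by simp
  have invx: "- 1 / x = Complex (- a) b"
  proof -
    have "x * Complex a (- b) = 1" unfolding x_def using a2 by (simp add: complex_eq_iff power2_eq_square)
    hence "1 / x = Complex a (- b)" by (metis divide_eq_eq mult.commute mult_zero_left zero_neq_one)
    thus ?thesis by (simp add: complex_eq_iff)
  qed
  define \<alpha> where "\<alpha> = Complex 0 b"
  have vform: "legendre_vec (int p) s x k = \<alpha> + of_real a * of_int (Legendre k (int p)) + (if int p dvd k then s - \<alpha> else 0)" for k
  proof (cases "int p dvd k")
    case True
    hence "Legendre k (int p) = 0" using Leg_zero_iff by blast
    thus ?thesis using True unfolding legendre_vec_def by simp
  next
    case False
    hence "\<not> [k = 0] (mod int p)" by (simp add: cong_0_iff)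
    thus ?thesis using False invx unfolding legendre_vec_def Legendre_def \<alpha>_def x_def
      by (auto simp: complex_eq_iff)
  qed
  have R: "real p * b^2 - a^2 + 2*b*\<sigma> - 2*b^2 = (t+1)*(a^2 - b^2)"
  proof (cases "\<eta> = 1")
    case True
    have t0: "t \<noteq> 0" using tge by simp
    have bs: "b * \<sigma> = - (t + 2) / t" using True sig2 t0 unfolding b_def by (simp add: power2_eq_square field_simps)
    have bb: "b^2 = (t + 2) / t^2" using True sig2 unfolding b_def by (simp add: power_divide)
    have pp: "real p = t^2 - 1" using t2 by simp
    have e1: "real p * b^2 - a^2 + 2*b*\<sigma> - 2*b^2 = (t^2 - 2) * b^2 - 1 + 2*(b*\<sigma>)"
      unfolding a2 pp by (simp add: algebra_simps)
    have e2: "(t+1)*(a^2 - b^2) = (t+1)*(1 - 2*b^2)" unfolding a2 by simp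
    have e3: "(t^2 - 2) * ((t + 2) / t^2) - 1 + 2*(- (t + 2) / t) = (t+1)*(1 - 2*((t + 2) / t^2))"
      using t0 by (simp add: field_simps power2_eq_square; simp add: algebra_simps)
    have "real p * b^2 - a^2 + 2*b*\<sigma> - 2*b^2 = (t^2 - 2) * b^2 - 1 + 2*(b*\<sigma>)" by (rule e1)
    also have "\<dots> = (t^2 - 2) * ((t + 2) / t^2) - 1 + 2*(- (t + 2) / t)" by (simp only: bs bb)
    also have "\<dots> = (t+1)*(1 - 2*((t + 2) / t^2))" by (rule e3)
    also have "\<dots> = (t+1)*(1 - 2*b^2)" by (simp only: bb)
    also have "\<dots> = (t+1)*(a^2 - b^2)" by (rule e2[symmetric])
    finally show ?thesis .
  next
    case False
    have bs: "b * \<sigma> = 1" using False sig0 unfolding b_def by simp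
    have bb: "b^2 = 1 / (t + 2)" using False sig2 unfolding b_def by (simp add: power_divide)
    have pp: "real p = t^2 - 1" using t2 by simp
    have t0: "t + 2 \<noteq> 0" using tge by simp
    have e1: "real p * b^2 - a^2 + 2*b*\<sigma> - 2*b^2 = (t^2 - 2) * b^2 - 1 + 2*(b*\<sigma>)"
      unfolding a2 pp by (simp add: algebra_simps)
    have e2: "(t+1)*(a^2 - b^2) = (t+1)*(1 - 2*b^2)" unfolding a2 by simp
    have e3: "(t^2 - 2) * (1 / (t + 2)) - 1 + 2*1 = (t+1)*(1 - 2*(1 / (t + 2)))"
      using t0 by (simp add: field_simps power2_eq_square; simp add: algebra_simps)
    have "real p * b^2 - a^2 + 2*b*\<sigma> - 2*b^2 = (t^2 - 2) * b^2 - 1 + 2*(b*\<sigma>)" by (rule e1)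
    also have "\<dots> = (t^2 - 2) * (1 / (t + 2)) - 1 + 2*1" by (simp only: bs bb)
    also have "\<dots> = (t+1)*(1 - 2*(1 / (t + 2)))" by (rule e3)
    also have "\<dots> = (t+1)*(1 - 2*b^2)" by (simp only: bb)
    also have "\<dots> = (t+1)*(a^2 - b^2)" by (rule e2[symmetric])
    finally show ?thesis .
  qed
  have I: "- \<eta> * (\<sigma> - b) = (t+1)*b"
  proof (cases "\<eta> = 1")
    case True
    have t0: "t \<noteq> 0" using tge by simp
    show ?thesis using True t0 unfolding b_def by (simp add: field_simps)
  next
    case False
    hence em: "\<eta> = -1" using eta by simp
    have ss: "\<sigma> * \<sigma> = t + 2" using sig2 by (simp add: power2_eq_square)
    show ?thesis using em False sig0 ss unfolding b_def by (simp add: field_simps)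
  qed
  show ?thesis
  proof (intro exI conjI allI impI)
    show "cmod x = 1" by (rule cm)
    fix j :: int assume nj: "\<not> int p dvd j"
    have n2j: "\<not> int p dvd 2 * j"
    proof
      assume "int p dvd 2 * j"
      hence "int p dvd 2 \<or> int p dvd j" using prime_dvd_mult_iff[of "int p"] pr by auto
      thus False using nj p2 zdvd_imp_le[of "int p" 2] by auto
    qed
    define \<epsilon> where "\<epsilon> = Legendre j (int p)"
    have eps: "\<epsilon> = 1 \<or> \<epsilon> = -1" using Leg_vals[of j "int p"] Leg_zero_iff[of j "int p"] nj
      unfolding \<epsilon>_def by auto
    have L2j: "Legendre (2 * j) (int p) = \<eta> * \<epsilon>" unfolding \<eta>_def \<epsilon>_def using Leg_mult[OF pr p2] .
    have "overlap (int p) (legendre_vec (int p) s x) (2 * j)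
       = of_nat p * (cnj \<alpha> * \<alpha>) - of_real (a^2)
         + (cnj \<alpha> - of_real a * of_int (\<eta> * \<epsilon>)) * (s - \<alpha>)
         + cnj (s - \<alpha>) * (\<alpha> + of_real a * of_int (\<eta> * \<epsilon>))"
      using overlap_formula[OF pr p4 n2j vform] unfolding L2j .
    also have "\<dots> = complex_of_real (t+1) * (\<alpha> + of_real a * of_int \<epsilon>)^2"
      unfolding \<alpha>_def sC by (rule final_alg[OF eta eps R I])
    also have "\<alpha> + of_real a * of_int \<epsilon> = legendre_vec (int p) s x j"
      unfolding vform \<epsilon>_def using nj by simp
    finally show "overlap (int p) (legendre_vec (int p) s x) (2 * j)
                = complex_of_real (sqrt (real p + 1) + 1) * (legendre_vec (int p) s x j)\<^sup>2"
      unfolding t_def .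
  qed
qed

end
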